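(* Let $V$ be a vector configuration of rank $r$ containing no copy of the zero vector, with dual degree $\deg^*(V)=\delta$ and with $n=r+d+1=2r+2\delta-1$ elements. Then $V$ admits a codegree$^*$ decomposition of length at least $r-1=d+1-2\delta$.
   Context: A vector configuration is a finite family (repetitions allowed) $V$ of vectors in $\mathbb{R}^r$; a subconfiguration is a subfamily, $\operatorname{rank}(V)=\dim\operatorname{lin}(V)$, and cardinalities count multiplicities. For a nonzero linear functional $f$, the oriented linear hyperplane $H=\{f=0\}$ has $H^+=\{f>0\}$, $\overline{H}^-=\{f\le0\}$. Dual codegree: $\operatorname{codeg}^*(W)=\min_H|\overline{H}^-\cap W|$; dual degree: $\deg^*(W)=\max_H|H^+\cap W|-\operatorname{rank}(W)$, over oriented linear hyperplanes $H$. A codegree$^*$ decomposition of $V$ of length $m$ is a partition $V=V_0\uplus V_1\uplus\dots\uplus V_m$ into subconfigurations ($V_0$ possibly empty) with $\operatorname{codeg}^*(V)=\sum_{i=1}^m\operatorname{codeg}^*(V_i)$ and $\operatorname{codeg}^*(V_i)\ge1$ for $i\ge1$. *)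

theory Defs
  imports "HOL-Analysis.Analysis"
begin

text \<open>A vector configuration is a finite family indexed by a finite set I, given by
  v :: 'i => 'a (repetitions allowed). Subconfigurations are subsets of the index set.
  Oriented linear hyperplanes {x. a \<bullet> x = 0}, a \<noteq> 0, with positive side a \<bullet> x > 0
  (every nonzero linear functional on a Euclidean space is of this form).\<close>

definition vc_rank :: "('i \<Rightarrow> 'a::euclidean_space) \<Rightarrow> 'i set \<Rightarrow> nat" where
  "vc_rank v W = dim (v ` W)"

definition codeg_star :: "('i \<Rightarrow> 'a::euclidean_space) \<Rightarrow> 'i set \<Rightarrow> nat" where
  "codeg_star v W = Min {card {i \<in> W. a \<bullet> v i \<le> 0} | a. a \<noteq> 0}"

definition deg_star :: "('i \<Rightarrow> 'a::euclidean_space) \<Rightarrow> 'i set \<Rightarrow> int" where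
  "deg_star v W = int (Max {card {i \<in> W. a \<bullet> v i > 0} | a. a \<noteq> 0}) - int (vc_rank v W)"

definition codeg_decomposition ::
  "('i \<Rightarrow> 'a::euclidean_space) \<Rightarrow> 'i set \<Rightarrow> nat \<Rightarrow> (nat \<Rightarrow> 'i set) \<Rightarrow> bool" where
  "codeg_decomposition v W m P \<longleftrightarrow>
     (\<Union>i\<le>m. P i) = W \<and>
     (\<forall>i\<le>m. \<forall>j\<le>m. i \<noteq> j \<longrightarrow> P i \<inter> P j = {}) \<and>
     codeg_star v W = (\<Sum>i=1..m. codeg_star v (P i)) \<and>
     (\<forall>i\<in>{1..m}. codeg_star v (P i) \<ge> 1)"

end

theory Submission
  imports Defs
begin


lemma span2_iff: "(x::'a::real_vector) \<in> span {a, b} \<longleftrightarrow> (\<exists>\<alpha> \<beta>. x = \<alpha> *\<^sub>R a + \<beta> *\<^sub>R b)"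
proof
  assume "x \<in> span {a, b}"
  then show "\<exists>\<alpha> \<beta>. x = \<alpha> *\<^sub>R a + \<beta> *\<^sub>R b"
    by (auto simp: span_breakdown_eq span_singleton algebra_simps) (metis add.commute diff_add_cancel)
next
  assume "\<exists>\<alpha> \<beta>. x = \<alpha> *\<^sub>R a + \<beta> *\<^sub>R b"
  then obtain \<alpha> \<beta> where "x = \<alpha> *\<^sub>R a + \<beta> *\<^sub>R b" by blast
  then show "x \<in> span {a, b}" by (simp add: span_add span_base span_scale)
qed

lemma EV:
  fixes \<alpha> \<beta> :: "'x \<Rightarrow> real"
  assumes "finite A"
  shows "\<exists>t. \<forall>x\<in>A. (\<alpha> x > 0 \<longrightarrow> t*\<alpha> x + \<beta> x > 0) \<and> (\<alpha> x < 0 \<longrightarrow> t*\<alpha> x + \<beta> x < 0)"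
proof -
  have "\<forall>\<^sub>F t in at_top. \<forall>x\<in>A. (\<alpha> x > 0 \<longrightarrow> t*\<alpha> x + \<beta> x > 0) \<and> (\<alpha> x < 0 \<longrightarrow> t*\<alpha> x + \<beta> x < 0)"
  proof (rule eventually_ball_finite[OF assms], rule ballI)
    fix x assume "x \<in> A"
    show "\<forall>\<^sub>F t in at_top. (\<alpha> x > 0 \<longrightarrow> t*\<alpha> x + \<beta> x > 0) \<and> (\<alpha> x < 0 \<longrightarrow> t*\<alpha> x + \<beta> x < 0)"
    proof (rule eventually_mono[OF eventually_gt_at_top[of "\<bar>\<beta> x\<bar> / \<bar>\<alpha> x\<bar>"]], intro conjI impI)
      fix t assume t: "\<bar>\<beta> x\<bar> / \<bar>\<alpha> x\<bar> < t"
      { assume h: "\<alpha> x > 0"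
        then have "\<bar>\<beta> x\<bar> < t * \<alpha> x" using t by (simp add: divide_less_eq)
        then show "t*\<alpha> x + \<beta> x > 0" by linarith }
      { assume h: "\<alpha> x < 0"
        then have "\<bar>\<beta> x\<bar> / (- \<alpha> x) < t" using t by simp
        moreover have c: "0 < - \<alpha> x" using h by simp
        ultimately have "\<bar>\<beta> x\<bar> < t * (- \<alpha> x)" using pos_divide_less_eq[OF c] by blast
        then show "t*\<alpha> x + \<beta> x < 0" by linarith }
    qed
  qed
  then show ?thesis by (auto simp: eventually_at_top_linorder)
qed

lemma GS:
  fixes S :: "'a::real_inner set"
  assumes "subspace S" "finite F" "\<forall>f\<in>F. \<exists>s\<in>S. inner s f \<noteq> 0"
  shows "\<exists>s\<in>S. \<forall>f\<in>F. inner s f \<noteq> 0"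
  using assms(2,3)
proof (induction F rule: finite_induct)
  case empty then show ?case using assms(1) subspace_0 by blast
next
  case (insert g F)
  then obtain s0 where s0: "s0 \<in> S" "\<forall>f\<in>F. inner s0 f \<noteq> 0" by auto
  obtain sg where sg: "sg \<in> S" "inner sg g \<noteq> 0" using insert by auto
  show ?case
  proof (cases "inner s0 g = 0")
    case False then show ?thesis using s0 by auto
  next
    case True
    obtain t where t: "\<forall>f\<in>F. (inner s0 f > 0 \<longrightarrow> t*inner s0 f + inner sg f > 0) \<and> (inner s0 f < 0 \<longrightarrow> t*inner s0 f + inner sg f < 0)"
      using EV[OF insert(1), of "\<lambda>f. inner s0 f" "\<lambda>f. inner sg f"] by blast
    have "t *\<^sub>R s0 + sg \<in> S" using s0 sg assms(1) by (simp add: subspace_add subspace_scale)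
    moreover have "\<forall>f\<in>insert g F. inner (t *\<^sub>R s0 + sg) f \<noteq> 0"
    proof
      fix f assume "f \<in> insert g F"
      then show "inner (t *\<^sub>R s0 + sg) f \<noteq> 0"
      proof
        assume "f = g" then show ?thesis using True sg by (simp add: inner_add_left)
      next
        assume f: "f \<in> F"
        then have "inner s0 f \<noteq> 0" using s0 by auto
        then show ?thesis using t f by (simp add: inner_add_left) (smt (verit))
      qed
    qed
    ultimately show ?thesis by blast
  qed
qed



definition DD :: "'a::real_inner \<Rightarrow> 'a \<Rightarrow> 'a \<Rightarrow> real" where
  "DD p q r = (norm (p - q))\<^sup>2 - (inner (p - q) (r - q))\<^sup>2 / (norm (r - q))\<^sup>2"

lemma GEO:
  fixes p q e :: "'a::real_inner"
  assumes e: "e \<noteq> 0" and s: "s = inner (p - q) e / inner e e"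
    and nl: "\<forall>t. p \<noteq> q + t *\<^sub>R e"
    and xy: "(la - s) * (lb - s) \<ge> 0" "\<bar>la - s\<bar> < \<bar>lb - s\<bar>"
  shows "DD (q + la *\<^sub>R e) p (q + lb *\<^sub>R e) < DD p q (q + e)"
    and "\<forall>t. q + la *\<^sub>R e \<noteq> p + t *\<^sub>R ((q + lb *\<^sub>R e) - p)"
    and "p \<noteq> q + lb *\<^sub>R e"
proof -
  define w where "w = p - q - s *\<^sub>R e"
  define E where "E = inner e e"
  define W where "W = inner w w"
  define x where "x = la - s"
  define y where "y = lb - s"
  have E: "E > 0" using e by (simp add: E_def)
  have we: "inner w e = 0" using E unfolding w_def s E_def by (simp add: inner_diff_left)
  have ew: "inner e w = 0" using we by (simp add: inner_commute)
  have "w \<noteq> 0" using nl unfolding w_def by (metis add.commute diff_add_cancel diff_diff_eq eq_iff_diff_eq_0)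
  then have W: "W > 0" by (simp add: W_def)
  have pq: "p - q = s *\<^sub>R e + w" by (simp add: w_def)
  have Ap: "q + la *\<^sub>R e - p = x *\<^sub>R e - w" by (simp add: w_def x_def algebra_simps)
  have Bp: "q + lb *\<^sub>R e - p = y *\<^sub>R e - w" by (simp add: w_def y_def algebra_simps)
  have n1: "(norm (p - q))\<^sup>2 = s^2 * E + W"
    unfolding pq power2_norm_eq_inner by (simp add: inner_add_left inner_add_right we ew E_def W_def power2_eq_square)
  have i1: "inner (p - q) (q + e - q) = s * E"
    by (simp add: pq inner_add_left we E_def)
  have n2: "(norm (q + e - q))\<^sup>2 = E" by (simp add: power2_norm_eq_inner E_def)
  have D1: "DD p q (q + e) = W" using E unfolding DD_def n1 i1 n2 by (simp add: field_simps power2_eq_square)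
  have nA: "(norm (q + la *\<^sub>R e - p))\<^sup>2 = x^2 * E + W"
    unfolding Ap power2_norm_eq_inner by (simp add: inner_diff_left inner_diff_right we ew E_def W_def power2_eq_square)
  have nB: "(norm (q + lb *\<^sub>R e - p))\<^sup>2 = y^2 * E + W"
    unfolding Bp power2_norm_eq_inner by (simp add: inner_diff_left inner_diff_right we ew E_def W_def power2_eq_square)
  have iAB: "inner (q + la *\<^sub>R e - p) (q + lb *\<^sub>R e - p) = x*y*E + W"
    unfolding Ap Bp by (simp add: inner_diff_left inner_diff_right we ew E_def W_def)
  have xy1: "x * y \<ge> 0" "\<bar>x\<bar> < \<bar>y\<bar>" using xy by (auto simp: x_def y_def)
  have xx: "x^2 \<le> x * y"
  proof -
    have "x^2 = \<bar>x\<bar> * \<bar>x\<bar>" by (simp add: power2_eq_square abs_mult_self_eq)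
    also have "\<dots> \<le> \<bar>x\<bar> * \<bar>y\<bar>" using xy1 by (intro mult_left_mono) auto
    also have "\<dots> = x * y" using xy1 by (simp add: abs_mult[symmetric])
    finally show ?thesis .
  qed
  have den: "y^2 * E + W > 0" using E W by (simp add: add_nonneg_pos)
  have key: "x^2 * E * (y^2*E + W) < (x*y*E + W)^2"
  proof -
    have A: "x^2 * E \<le> x*y*E" using xx E by (simp add: mult_right_mono)
    have A2: "x^2 * E * W \<le> x*y*E * W" using A W by (simp add: mult_right_mono)
    have B: "0 \<le> x*y*E*W" using xy1 E W by simp
    have C: "0 < W * W" using W by simp
    have eq1: "x^2 * E * (y^2*E + W) = (x*y*E)^2 + x^2*E*W" by (simp add: power2_eq_square algebra_simps)
    have eq2: "(x*y*E + W)^2 = (x*y*E)^2 + 2*(x*y*E*W) + W*W" by (simp add: power2_eq_square algebra_simps)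
    show ?thesis unfolding eq1 eq2 using A2 B C by linarith
  qed
  have "DD (q + la *\<^sub>R e) p (q + lb *\<^sub>R e) = x^2 * E + W - (x*y*E + W)^2 / (y^2*E + W)"
    unfolding DD_def nA nB iAB by simp
  also have "\<dots> < W"
  proof -
    have "x^2 * E < (x*y*E + W)^2 / (y^2*E + W)"
      using key den by (simp add: less_divide_eq)
    then show ?thesis by simp
  qed
  finally show "DD (q + la *\<^sub>R e) p (q + lb *\<^sub>R e) < DD p q (q + e)" using D1 by simp
  show "\<forall>t. q + la *\<^sub>R e \<noteq> p + t *\<^sub>R ((q + lb *\<^sub>R e) - p)"
  proof (intro allI notI)
    fix t assume h: "q + la *\<^sub>R e = p + t *\<^sub>R ((q + lb *\<^sub>R e) - p)"
    then have "q + la *\<^sub>R e - p = t *\<^sub>R ((q + lb *\<^sub>R e) - p)" by (simp add: algebra_simps)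
    then have h2: "x *\<^sub>R e - w = t *\<^sub>R (y *\<^sub>R e - w)" using Ap Bp by simp
    then have "inner (x *\<^sub>R e - w) w = inner (t *\<^sub>R (y *\<^sub>R e - w)) w" by simp
    then have "- W = - t * W" by (simp add: inner_diff_left we ew W_def)
    then have t1: "t = 1" using W by simp
    then have "(x - y) *\<^sub>R e = 0" using h2 by (simp add: algebra_simps)
    then have "x = y" using e by simp
    then show False using xy1 by simp
  qed
  show "p \<noteq> q + lb *\<^sub>R e"
  proof
    assume "p = q + lb *\<^sub>R e"
    then have "y *\<^sub>R e - w = 0" using Bp by simp
    then have "inner (y *\<^sub>R e - w) w = 0" by simp
    then show False using W by (simp add: inner_diff_left we ew W_def)
  qed
qed



lemma pairlem:
  fixes a b s :: real
  assumes "a \<noteq> b" "(a - s) * (b - s) \<ge> 0"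
  shows "\<bar>a - s\<bar> < \<bar>b - s\<bar> \<or> \<bar>b - s\<bar> < \<bar>a - s\<bar>"
proof (rule ccontr)
  assume "\<not> ?thesis"
  then have "\<bar>a - s\<bar> = \<bar>b - s\<bar>" by linarith
  then have "a - s = b - s \<or> a - s = - (b - s)" by (simp only: abs_eq_iff)
  then have h: "a - s = - (b - s)" using assms(1) by auto
  then have "(a - s) * (b - s) = - ((b - s) * (b - s))" by (simp only: mult_minus_left)
  then have "(b - s) * (b - s) \<le> 0" using assms(2) by linarith
  then have "b - s = 0" by (metis mult_eq_0_iff not_square_less_zero order_antisym_conv zero_le_square)
  then show False using h assms(1) by simp
qed

lemma sign3: "(x1::real) * x2 \<ge> 0 \<or> x1 * x3 \<ge> 0 \<or> x2 * x3 \<ge> 0"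
proof (cases "x1 \<ge> 0")
  case True
  show ?thesis
  proof (cases "x2 \<ge> 0")
    case True then show ?thesis using \<open>x1 \<ge> 0\<close> by simp
  next
    case False
    then show ?thesis using \<open>x1 \<ge> 0\<close>
      by (cases "x3 \<ge> 0") (simp_all add: zero_le_mult_iff)
  qed
next
  case False
  show ?thesis
  proof (cases "x2 \<ge> 0")
    case True then show ?thesis using False
      by (cases "x3 \<ge> 0") (simp_all add: zero_le_mult_iff)
  next
    case f2: False
    then show ?thesis using False by (simp add: zero_le_mult_iff)
  qed
qed

lemma sel3:
  fixes l s :: real
  assumes "l \<noteq> 0" "l \<noteq> 1"
  shows "\<exists>la\<in>{0,1,l}. \<exists>lb\<in>{0,1,l}. (la - s) * (lb - s) \<ge> 0 \<and> \<bar>la - s\<bar> < \<bar>lb - s\<bar>"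
proof -
  have pair: "\<exists>la\<in>{0,1,l}. \<exists>lb\<in>{0,1,l}. (la - s) * (lb - s) \<ge> 0 \<and> \<bar>la - s\<bar> < \<bar>lb - s\<bar>"
    if "a \<in> {0,1,l}" "b \<in> {0,1,l}" "a \<noteq> b" "(a - s) * (b - s) \<ge> 0" for a b
  proof -
    have "(b - s) * (a - s) \<ge> 0" using that(4) by (simp add: mult.commute)
    then show ?thesis using pairlem[OF that(3,4)] that(1,2,4) by blast
  qed
  have "(0 - s) * (1 - s) \<ge> 0 \<or> (0 - s) * (l - s) \<ge> 0 \<or> (1 - s) * (l - s) \<ge> 0"
    by (rule sign3)
  moreover have "(0::real) \<in> {0,1,l}" "(1::real) \<in> {0,1,l}" "l \<in> {0,1,l}" by auto
  moreover have "(0::real) \<noteq> 1" by simp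
  ultimately show ?thesis using pair assms by metis
qed

lemma kelly:
  fixes X :: "'a::real_inner set"
  assumes fin: "finite X"
    and H1: "\<forall>q\<in>X. \<forall>r\<in>X. q \<noteq> r \<longrightarrow> (\<exists>c\<in>X. c \<noteq> q \<and> c \<noteq> r \<and> (\<exists>t. c = q + t *\<^sub>R (r - q)))"
    and H2: "\<exists>p\<in>X. \<exists>q\<in>X. \<exists>r\<in>X. q \<noteq> r \<and> (\<forall>t. p \<noteq> q + t *\<^sub>R (r - q))"
  shows False
proof -
  define T where "T = {(p,q,r). p \<in> X \<and> q \<in> X \<and> r \<in> X \<and> q \<noteq> r \<and> (\<forall>t. p \<noteq> q + t *\<^sub>R (r - q))}"
  have finT: "finite T" unfolding T_def
    by (rule finite_subset[of _ "X \<times> X \<times> X"]) (auto simp: fin)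
  have neT: "T \<noteq> {}" using H2 unfolding T_def by blast
  define f :: "'a \<times> 'a \<times> 'a \<Rightarrow> real" where "f = (\<lambda>(p,q,r). DD p q r)"
  have "Min (f ` T) \<in> f ` T" using finT neT by simp
  then obtain z where z: "z \<in> T" "f z = Min (f ` T)" by auto
  obtain p q r where pqr: "z = (p,q,r)" by (cases z) auto
  have zmin: "\<And>y. y \<in> T \<Longrightarrow> f z \<le> f y" using z finT by simp
  have p: "p \<in> X" and q: "q \<in> X" and r: "r \<in> X" and qr: "q \<noteq> r"
    and nl: "\<forall>t. p \<noteq> q + t *\<^sub>R (r - q)" using z(1) pqr unfolding T_def by auto
  obtain c where c: "c \<in> X" "c \<noteq> q" "c \<noteq> r" and "\<exists>t. c = q + t *\<^sub>R (r - q)" using H1 q r qr by blast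
  then obtain l where l: "c = q + l *\<^sub>R (r - q)" by blast
  define e where "e = r - q"
  have e: "e \<noteq> 0" using qr by (simp add: e_def)
  have l0: "l \<noteq> 0" using c(2) l by auto
  have l1: "l \<noteq> 1" using c(3) l by auto
  define s where "s = inner (p - q) e / inner e e"
  obtain la lb where la: "la \<in> {0,1,l}" and lb: "lb \<in> {0,1,l}"
    and xy: "(la - s) * (lb - s) \<ge> 0" "\<bar>la - s\<bar> < \<bar>lb - s\<bar>"
    using sel3[OF l0 l1, of s] by blast
  have mem: "q + u *\<^sub>R e \<in> X" if "u \<in> {0,1,l}" for u
    using that q r c(1) l by (auto simp: e_def)
  have nl': "\<forall>t. p \<noteq> q + t *\<^sub>R e" using nl by (simp add: e_def)
  note G = GEO[OF e s_def nl' xy]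
  have "(q + la *\<^sub>R e, p, q + lb *\<^sub>R e) \<in> T"
    unfolding T_def using mem[OF la] mem[OF lb] p G(2) G(3) by auto
  then have "f z \<le> DD (q + la *\<^sub>R e) p (q + lb *\<^sub>R e)" using zmin by (auto simp: f_def)
  moreover have "f z = DD p q (q + e)" using pqr by (simp add: f_def e_def)
  ultimately show False using G(1) by simp
qed



lemma KL1:
  fixes v :: "'i \<Rightarrow> 'a::euclidean_space"
  assumes fin: "finite V" and nz: "\<forall>x\<in>V. v x \<noteq> 0" and cardV: "card V + 1 = 2*k"
    and bound: "\<forall>a. card {x\<in>V. inner a (v x) > 0} \<le> k"
    and noanti: "\<forall>x\<in>V. \<forall>y\<in>V. \<forall>c>0. v y \<noteq> -c *\<^sub>R v x"
    and i: "i\<in>V" and j: "j\<in>V" and np: "\<not>(\<exists>c. v j = c *\<^sub>R v i)"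
  shows "\<exists>l\<in>V. v l \<in> span{v i, v j} \<and> \<not>(\<exists>c. v l = c *\<^sub>R v i) \<and> \<not>(\<exists>c. v l = c *\<^sub>R v j)"
proof (rule ccontr)
  assume neg: "\<not> ?thesis"
  define U where "U = span {v i, v j}"
  define S where "S = {a. inner a (v i) = 0 \<and> inner a (v j) = 0}"
  have subS: "subspace S" unfolding subspace_def S_def by (auto simp: inner_add_left)
  have Sperp: "inner a u = 0" if aS': "a \<in> S" and uU: "u \<in> U" for a u
  proof -
    obtain \<alpha> \<beta> where "u = \<alpha> *\<^sub>R v i + \<beta> *\<^sub>R v j" using uU unfolding U_def span2_iff by blast
    then show ?thesis using aS' by (simp add: S_def inner_add_right)
  qed
  define F where "F = v ` {x\<in>V. v x \<notin> U}"
  have finF: "finite F" using fin by (simp add: F_def)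
  have "\<forall>f\<in>F. \<exists>s\<in>S. inner s f \<noteq> 0"
  proof
    fix f assume "f \<in> F"
    then have fU: "f \<notin> U" by (auto simp: F_def)
    obtain y z where y: "y \<in> span {v i, v j}" and z: "\<And>w. w \<in> span {v i, v j} \<Longrightarrow> orthogonal z w"
      and fyz: "f = y + z"
      using orthogonal_subspace_decomp_exists[of "{v i, v j}" f] by blast
    have "z \<in> S" using z[of "v i"] z[of "v j"] by (simp add: S_def span_base orthogonal_def)
    moreover have "z \<noteq> 0" using fU fyz y by (auto simp: U_def)
    moreover have "inner z f = inner z z" using z[OF y] fyz by (simp add: inner_add_right orthogonal_def)
    ultimately show "\<exists>s\<in>S. inner s f \<noteq> 0" by (metis inner_eq_zero_iff)
  qed
  then obtain a where aS: "a \<in> S" and aF: "\<forall>f\<in>F. inner a f \<noteq> 0" using GS[OF subS finF] by blast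
  define u where "u = (1 / norm (v i)) *\<^sub>R v i"
  define w where "w = (1 / norm (v j)) *\<^sub>R v j"
  define b where "b = u + w"
  have nvi: "norm (v i) > 0" using nz i by simp
  have nvj: "norm (v j) > 0" using nz j by simp
  have nu: "inner u u = 1" using nvi by (simp add: u_def power2_norm_eq_inner[symmetric] power2_eq_square)
  have nw: "inner w w = 1" using nvj by (simp add: w_def power2_norm_eq_inner[symmetric] power2_eq_square)
  have b0: "b \<noteq> 0"
  proof
    assume "b = 0"
    then have "w = - u" by (simp add: b_def add_eq_0_iff)
    have "v j = norm (v j) *\<^sub>R w" using nvj by (simp add: w_def)
    also have "\<dots> = norm (v j) *\<^sub>R (- ((1 / norm (v i)) *\<^sub>R v i))" using \<open>w = - u\<close> by (simp add: u_def)
    also have "\<dots> = (- norm (v j) / norm (v i)) *\<^sub>R v i" by simp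
    finally have "v j = (- norm (v j) / norm (v i)) *\<^sub>R v i" .
    then show False using np by blast
  qed
  have bb: "inner b b = 2 + 2 * inner u w" unfolding b_def
    by (simp add: inner_add_left inner_add_right nu nw inner_commute)
  have bu: "inner b u > 0"
  proof -
    have "inner b u = inner u u + inner w u" by (simp add: b_def inner_add_left)
    then have "inner b u = 1 + inner u w" using nu by (simp add: inner_commute)
    moreover have "inner b b > 0" using b0 by simp
    ultimately show ?thesis using bb by linarith
  qed
  have bw: "inner b w > 0"
  proof -
    have "inner b w = 1 + inner u w" by (simp add: b_def inner_add_left nw)
    moreover have "inner b b > 0" using b0 by simp
    ultimately show ?thesis using bb by linarith
  qed
  have bvi: "inner b (v i) > 0"
  proof -
    have "v i = norm (v i) *\<^sub>R u" using nvi by (simp add: u_def)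
    then show ?thesis using bu nvi by (metis inner_scaleR_right mult_pos_pos)
  qed
  have bvj: "inner b (v j) > 0"
  proof -
    have "v j = norm (v j) *\<^sub>R w" using nvj by (simp add: w_def)
    then show ?thesis using bw nvj by (metis inner_scaleR_right mult_pos_pos)
  qed
  define UU where "UU = {x\<in>V. v x \<in> U}"
  have bpos: "inner b (v y) > 0" if "y \<in> UU" for y
  proof -
    have yV: "y \<in> V" and yU: "v y \<in> span {v i, v j}" using that by (auto simp: UU_def U_def)
    then have "(\<exists>c. v y = c *\<^sub>R v i) \<or> (\<exists>c. v y = c *\<^sub>R v j)" using neg by blast
    then show ?thesis
    proof
      assume "\<exists>c. v y = c *\<^sub>R v i"
      then obtain c where c: "v y = c *\<^sub>R v i" by blast
      have "c \<noteq> 0" using c nz yV by auto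
      moreover have "\<not> c < 0"
      proof
        assume "c < 0"
        then have "v y = - (- c) *\<^sub>R v i" "- c > 0" using c by auto
        then show False using noanti i yV by blast
      qed
      ultimately have "c > 0" by linarith
      then show ?thesis using c bvi by simp
    next
      assume "\<exists>c. v y = c *\<^sub>R v j"
      then obtain c where c: "v y = c *\<^sub>R v j" by blast
      have "c \<noteq> 0" using c nz yV by auto
      moreover have "\<not> c < 0"
      proof
        assume "c < 0"
        then have "v y = - (- c) *\<^sub>R v j" "- c > 0" using c by auto
        then show False using noanti j yV by blast
      qed
      ultimately have "c > 0" by linarith
      then show ?thesis using c bvj by simp
    qed
  qed
  have aU: "inner a (v y) = 0" if "y \<in> UU" for y using Sperp[OF aS] that by (simp add: UU_def)
  have aN: "inner a (v y) \<noteq> 0" if "y \<in> V" "y \<notin> UU" for y using aF that by (auto simp: F_def UU_def)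
  obtain t1 where t1: "\<forall>x\<in>V. (inner a (v x) > 0 \<longrightarrow> t1 * inner a (v x) + inner b (v x) > 0) \<and> (inner a (v x) < 0 \<longrightarrow> t1 * inner a (v x) + inner b (v x) < 0)"
    using EV[OF fin, of "\<lambda>x. inner a (v x)" "\<lambda>x. inner b (v x)"] by blast
  obtain t2 where t2: "\<forall>x\<in>V. (- inner a (v x) > 0 \<longrightarrow> t2 * (- inner a (v x)) + inner b (v x) > 0) \<and> (- inner a (v x) < 0 \<longrightarrow> t2 * (- inner a (v x)) + inner b (v x) < 0)"
    using EV[OF fin, of "\<lambda>x. - inner a (v x)" "\<lambda>x. inner b (v x)"] by blast
  define c1 where "c1 = t1 *\<^sub>R a + b"
  define c2 where "c2 = t2 *\<^sub>R (- a) + b"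
  define Ap where "Ap = {x\<in>V. inner a (v x) > 0}"
  define An where "An = {x\<in>V. inner a (v x) < 0}"
  have sub1: "Ap \<union> UU \<subseteq> {x\<in>V. inner c1 (v x) > 0}"
  proof
    fix x assume "x \<in> Ap \<union> UU"
    then show "x \<in> {x\<in>V. inner c1 (v x) > 0}"
    proof
      assume "x \<in> Ap" then show ?thesis using t1 by (auto simp: Ap_def c1_def inner_add_left)
    next
      assume h: "x \<in> UU" then show ?thesis using aU[OF h] bpos[OF h] by (auto simp: UU_def c1_def inner_add_left)
    qed
  qed
  have sub2: "An \<union> UU \<subseteq> {x\<in>V. inner c2 (v x) > 0}"
  proof
    fix x assume "x \<in> An \<union> UU"
    then show "x \<in> {x\<in>V. inner c2 (v x) > 0}"
    proof
      assume "x \<in> An" then show ?thesis using t2 by (auto simp: An_def c2_def inner_add_left inner_diff_left)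
    next
      assume h: "x \<in> UU" then show ?thesis using aU[OF h] bpos[OF h] by (auto simp: UU_def c2_def inner_add_left inner_diff_left)
    qed
  qed
  have finUU: "finite UU" "finite Ap" "finite An" using fin by (auto simp: UU_def Ap_def An_def)
  have d1: "Ap \<inter> UU = {}" "An \<inter> UU = {}" "Ap \<inter> An = {}" using aU by (auto simp: Ap_def An_def)
  have cov: "Ap \<union> An \<union> UU = V"
  proof
    show "Ap \<union> An \<union> UU \<subseteq> V" by (auto simp: Ap_def An_def UU_def)
    show "V \<subseteq> Ap \<union> An \<union> UU"
    proof
      fix x assume xV: "x \<in> V"
      show "x \<in> Ap \<union> An \<union> UU"
      proof (cases "x \<in> UU")
        case False
        then have "inner a (v x) \<noteq> 0" using aN xV by blast
        then have "inner a (v x) > 0 \<or> inner a (v x) < 0" by linarith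
        then show ?thesis using xV by (auto simp: Ap_def An_def)
      qed simp
    qed
  qed
  have "card (Ap \<union> An \<union> UU) = card (Ap \<union> An) + card UU"
    using d1 finUU by (intro card_Un_disjoint) auto
  moreover have "card (Ap \<union> An) = card Ap + card An"
    using d1 finUU by (intro card_Un_disjoint) auto
  ultimately have "card V = card Ap + card An + card UU" using cov by simp
  moreover have "card (Ap \<union> UU) = card Ap + card UU" "card (An \<union> UU) = card An + card UU"
    using d1 finUU by (auto simp: card_Un_disjoint)
  moreover have "card (Ap \<union> UU) \<le> card {x\<in>V. inner c1 (v x) > 0}"
    using sub1 fin by (intro card_mono) auto
  moreover have "card (An \<union> UU) \<le> card {x\<in>V. inner c2 (v x) > 0}"
    using sub2 fin by (intro card_mono) auto
  moreover have "card UU \<ge> 2"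
  proof -
    have "i \<noteq> j" using np by (metis scaleR_one)
    moreover have "{i, j} \<subseteq> UU" using i j by (auto simp: UU_def U_def span_base)
    ultimately have "card {i, j} \<le> card UU" using finUU(1) by (intro card_mono) auto
    then show ?thesis using \<open>i \<noteq> j\<close> by simp
  qed
  ultimately show False using bound[rule_format, of c1] bound[rule_format, of c2] cardV by linarith
qed



lemma KL:
  fixes v :: "'i \<Rightarrow> 'a::euclidean_space"
  assumes fin: "finite V" and nz: "\<forall>x\<in>V. v x \<noteq> 0" and cardV: "card V + 1 = 2*k"
    and bound: "\<forall>a. card {x\<in>V. inner a (v x) > 0} \<le> k"
    and rk: "dim (v ` V) \<ge> 3"
  shows "\<exists>x\<in>V. \<exists>y\<in>V. \<exists>c>0. v y = -c *\<^sub>R v x"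
proof (rule ccontr)
  assume "\<not> ?thesis"
  then have noanti: "\<forall>x\<in>V. \<forall>y\<in>V. \<forall>c>0. v y \<noteq> -c *\<^sub>R v x" by blast
  have "\<forall>f\<in>v ` V. \<exists>s\<in>UNIV. inner s f \<noteq> 0" using nz by (metis UNIV_I imageE inner_eq_zero_iff)
  then obtain a0 where a0: "\<forall>f\<in>v ` V. inner a0 f \<noteq> 0" using GS[of UNIV "v ` V"] fin by auto
  define cc where "cc x = inner a0 (v x)" for x
  have cc0: "cc x \<noteq> 0" if "x \<in> V" for x using a0 that by (simp add: cc_def)
  define p where "p x = (1 / cc x) *\<^sub>R v x" for x
  have vp: "v x = cc x *\<^sub>R p x" if "x \<in> V" for x using cc0[OF that] by (simp add: p_def)
  have par: "p x = p y \<longleftrightarrow> (\<exists>c. v y = c *\<^sub>R v x)" if x: "x \<in> V" and y: "y \<in> V" for x y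
  proof
    assume "p x = p y"
    then have "v y = (cc y / cc x) *\<^sub>R v x" using vp[OF x] vp[OF y] cc0[OF x] by simp
    then show "\<exists>c. v y = c *\<^sub>R v x" by blast
  next
    assume "\<exists>c. v y = c *\<^sub>R v x"
    then obtain c where c: "v y = c *\<^sub>R v x" by blast
    have "c \<noteq> 0" using c nz y by auto
    have "cc y = c * cc x" using c by (simp add: cc_def)
    then show "p x = p y" using c \<open>c \<noteq> 0\<close> by (simp add: p_def)
  qed
  have H1: "\<forall>q\<in>p ` V. \<forall>r\<in>p ` V. q \<noteq> r \<longrightarrow> (\<exists>c\<in>p ` V. c \<noteq> q \<and> c \<noteq> r \<and> (\<exists>t. c = q + t *\<^sub>R (r - q)))"
  proof (intro ballI impI)
    fix q r assume q: "q \<in> p ` V" and r: "r \<in> p ` V" and qr: "q \<noteq> r"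
    obtain i where i: "i \<in> V" "q = p i" using q by blast
    obtain j where j: "j \<in> V" "r = p j" using r by blast
    have np: "\<not> (\<exists>c. v j = c *\<^sub>R v i)" using par[OF i(1) j(1)] qr i j by blast
    obtain l where l: "l \<in> V" "v l \<in> span {v i, v j}" "\<not>(\<exists>c. v l = c *\<^sub>R v i)" "\<not>(\<exists>c. v l = c *\<^sub>R v j)"
      using KL1[OF fin nz cardV bound noanti i(1) j(1) np] by blast
    have li: "p l \<noteq> p i" using par[OF i(1) l(1)] l(3) by metis
    have lj: "p l \<noteq> p j" using par[OF j(1) l(1)] l(4) by metis
    obtain \<alpha> \<beta> where ab: "v l = \<alpha> *\<^sub>R v i + \<beta> *\<^sub>R v j" using l(2) span2_iff by blast
    have ccl: "cc l = \<alpha> * cc i + \<beta> * cc j" using ab by (simp add: cc_def inner_add_right)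
    define t where "t = \<beta> * cc j / cc l"
    have "cc l *\<^sub>R (p i + t *\<^sub>R (p j - p i)) = (cc l - \<beta> * cc j) *\<^sub>R p i + (\<beta> * cc j) *\<^sub>R p j"
      using cc0[OF l(1)] by (simp add: t_def algebra_simps)
    also have "\<dots> = v l" using ccl ab vp[OF i(1)] vp[OF j(1)] by simp
    finally have eqX: "cc l *\<^sub>R (p i + t *\<^sub>R (p j - p i)) = v l" .
    have "p l = (1 / cc l) *\<^sub>R v l" by (simp add: p_def)
    also have "\<dots> = (1 / cc l) *\<^sub>R (cc l *\<^sub>R (p i + t *\<^sub>R (p j - p i)))" by (simp only: eqX)
    finally have "p l = (1 / cc l) *\<^sub>R (cc l *\<^sub>R (p i + t *\<^sub>R (p j - p i)))" .
    then have "p l = p i + t *\<^sub>R (p j - p i)" using cc0[OF l(1)] by simp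
    then show "\<exists>c\<in>p ` V. c \<noteq> q \<and> c \<noteq> r \<and> (\<exists>t. c = q + t *\<^sub>R (r - q))"
      using l(1) li lj i j by blast
  qed
  have H2: "\<exists>p0\<in>p ` V. \<exists>q\<in>p ` V. \<exists>r\<in>p ` V. q \<noteq> r \<and> (\<forall>t. p0 \<noteq> q + t *\<^sub>R (r - q))"
  proof -
    have "V \<noteq> {}" using rk by auto
    then obtain i0 where i0: "i0 \<in> V" by blast
    have "\<exists>j0\<in>V. \<not> (\<exists>c. v j0 = c *\<^sub>R v i0)"
    proof (rule ccontr)
      assume "\<not> ?thesis"
      then have "v ` V \<subseteq> span {v i0}" by (auto simp: span_singleton)
      then have "dim (v ` V) \<le> card {v i0}" by (intro dim_le_card) auto
      then show False using rk by simp
    qed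
    then obtain j0 where j0: "j0 \<in> V" "\<not> (\<exists>c. v j0 = c *\<^sub>R v i0)" by blast
    have "\<exists>x0\<in>V. v x0 \<notin> span {v i0, v j0}"
    proof (rule ccontr)
      assume "\<not> ?thesis"
      then have "v ` V \<subseteq> span {v i0, v j0}" by auto
      then have "dim (v ` V) \<le> card {v i0, v j0}" by (intro dim_le_card) auto
      also have "\<dots> \<le> 2" by (simp add: card_insert_le_m1)
      finally show False using rk by simp
    qed
    then obtain x0 where x0: "x0 \<in> V" "v x0 \<notin> span {v i0, v j0}" by blast
    have ne: "p i0 \<noteq> p j0" using par[OF i0 j0(1)] j0(2) by blast
    have "\<forall>t. p x0 \<noteq> p i0 + t *\<^sub>R (p j0 - p i0)"
    proof (intro allI notI)
      fix t assume h: "p x0 = p i0 + t *\<^sub>R (p j0 - p i0)"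
      have "v x0 = cc x0 *\<^sub>R (p i0 + t *\<^sub>R (p j0 - p i0))" using vp[OF x0(1)] h by simp
      also have "\<dots> = (cc x0 * (1 - t)) *\<^sub>R p i0 + (cc x0 * t) *\<^sub>R p j0"
        by (simp add: algebra_simps)
      also have "\<dots> = (cc x0 * (1 - t) / cc i0) *\<^sub>R v i0 + (cc x0 * t / cc j0) *\<^sub>R v j0"
        by (simp add: p_def)
      finally have "v x0 \<in> span {v i0, v j0}" unfolding span2_iff by blast
      then show False using x0(2) by blast
    qed
    then show ?thesis using x0(1) i0 j0(1) ne by blast
  qed
  show False using kelly[OF _ H1 H2] fin by blast
qed



definition cnt :: "('i \<Rightarrow> 'a::euclidean_space) \<Rightarrow> 'a \<Rightarrow> 'i set \<Rightarrow> nat" where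
  "cnt v b X = card {x\<in>X. inner b (v x) \<le> 0}"

definition good :: "('i \<Rightarrow> 'a::euclidean_space) \<Rightarrow> 'i set \<Rightarrow> 'a \<Rightarrow> nat \<Rightarrow> (nat \<Rightarrow> 'i set) \<Rightarrow> bool" where
  "good v V a m Q \<longleftrightarrow> (\<Union>i\<le>m. Q i) = V \<and> (\<forall>i\<le>m. \<forall>j\<le>m. i \<noteq> j \<longrightarrow> Q i \<inter> Q j = {}) \<and>
     (\<forall>x\<in>Q 0. inner a (v x) > 0) \<and>
     (\<forall>i\<in>{1..m}. 1 \<le> cnt v a (Q i) \<and> (\<forall>b. cnt v a (Q i) \<le> cnt v b (Q i)))"

lemma goodD:
  assumes "good v V a m Q"
  shows "(\<Union>i\<le>m. Q i) = V" "\<And>i j. i \<le> m \<Longrightarrow> j \<le> m \<Longrightarrow> i \<noteq> j \<Longrightarrow> Q i \<inter> Q j = {}"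
    "\<And>x. x \<in> Q 0 \<Longrightarrow> inner a (v x) > 0"
    "\<And>i. i \<in> {1..m} \<Longrightarrow> 1 \<le> cnt v a (Q i)"
    "\<And>i b. i \<in> {1..m} \<Longrightarrow> cnt v a (Q i) \<le> cnt v b (Q i)"
  using assms unfolding good_def by auto

lemma cnt_split: "finite X \<Longrightarrow> cnt v b X + card {x\<in>X. inner b (v x) > 0} = card X"
proof -
  assume f: "finite X"
  have "card {x\<in>X. inner b (v x) \<le> 0} + card {x\<in>X. inner b (v x) > 0} = card ({x\<in>X. inner b (v x) \<le> 0} \<union> {x\<in>X. inner b (v x) > 0})"
    using f by (intro card_Un_disjoint[symmetric]) auto
  also have "{x\<in>X. inner b (v x) \<le> 0} \<union> {x\<in>X. inner b (v x) > 0} = X" by auto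
  finally show ?thesis by (simp add: cnt_def)
qed

lemma claimC:
  fixes v :: "'i \<Rightarrow> 'a::euclidean_space"
  shows "\<forall>V. finite V \<longrightarrow> (\<forall>x\<in>V. v x \<noteq> 0) \<longrightarrow> card V + 1 = 2*k \<longrightarrow>
    (\<forall>a. card {x\<in>V. inner a (v x) > 0} \<le> k) \<longrightarrow>
    (\<exists>a m Q. a \<noteq> 0 \<and> good v V a m Q \<and> dim (v ` V) \<le> m + 1)"
proof (induction k)
  case 0 then show ?case by simp
next
  case (Suc k)
  show ?case
  proof (intro allI impI)
    fix V assume fin: "finite V" and nz: "\<forall>x\<in>V. v x \<noteq> 0" and cardV: "card V + 1 = 2 * Suc k"
      and bound: "\<forall>a. card {x\<in>V. inner a (v x) > 0} \<le> Suc k"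
    show "\<exists>a m Q. a \<noteq> 0 \<and> good v V a m Q \<and> dim (v ` V) \<le> m + 1"
    proof (cases "dim (v ` V) \<le> 2")
      case True
      show ?thesis
      proof (cases "k = 0")
        case True
        then have "card V = 1" using cardV by simp
        then obtain x0 where V: "V = {x0}" by (auto simp: card_Suc_eq)
        have a0: "v x0 \<noteq> 0" using nz V by simp
        have "good v V (v x0) 0 (\<lambda>_. V)" unfolding good_def using a0 V by simp
        moreover have "dim (v ` V) \<le> 0 + 1" using V by (simp add: dim_le_card)
        ultimately show ?thesis using a0 by blast
      next
        case False
        define Cs where "Cs = {cnt v b V | b. b \<noteq> 0}"
        have finCs: "finite Cs"
          by (rule finite_subset[of _ "{0..card V}"]) (auto simp: Cs_def cnt_def intro!: card_mono fin)
        obtain e :: 'a where e: "e \<noteq> 0" using SOME_Basis nonzero_Basis by blast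
        have neCs: "Cs \<noteq> {}" using e by (auto simp: Cs_def)
        have "Min Cs \<in> Cs" using finCs neCs by simp
        then obtain a where a: "a \<noteq> 0" "cnt v a V = Min Cs" by (auto simp: Cs_def)
        have amin: "cnt v a V \<le> cnt v b V" for b
        proof (cases "b = 0")
          case True
          then have "cnt v b V = card V" by (simp add: cnt_def)
          then show ?thesis using fin by (simp add: cnt_def card_mono)
        next
          case False
          then have "cnt v b V \<in> Cs" by (auto simp: Cs_def)
          then show ?thesis using a finCs by simp
        qed
        have a1: "1 \<le> cnt v a V"
          using cnt_split[OF fin, of v a] bound[rule_format, of a] cardV False by simp
        have u1: "(\<Union>i\<le>1::nat. (if i = 0 then {} else V)) = V"
        proof
          show "(\<Union>i\<le>1::nat. (if i = 0 then {} else V)) \<subseteq> V" by (auto split: if_splits)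
          show "V \<subseteq> (\<Union>i\<le>1::nat. (if i = 0 then {} else V))"
          proof
            fix z assume "z \<in> V"
            then show "z \<in> (\<Union>i\<le>1::nat. (if i = 0 then {} else V))" by (intro UN_I[of 1]) auto
          qed
        qed
        have "good v V a 1 (\<lambda>i. if i = 0 then {} else V)"
          unfolding good_def using a1 amin u1 by simp
        moreover have "dim (v ` V) \<le> 1 + 1" using True by simp
        ultimately show ?thesis using a(1) by blast
      qed
    next
      case False
      then have rk: "dim (v ` V) \<ge> 3" by simp
      obtain x y c where x: "x \<in> V" and y: "y \<in> V" and c: "c > 0" and vy: "v y = -c *\<^sub>R v x"
        using KL[OF fin nz cardV bound rk] by blast
      have xy: "x \<noteq> y"
      proof
        assume "x = y"
        then have "v x = - (c *\<^sub>R v x)" using vy by simp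
        then have "v x + c *\<^sub>R v x = 0" by (simp only: eq_neg_iff_add_eq_0)
        then have "(1 + c) *\<^sub>R v x = 0" by (simp add: scaleR_add_left)
        then show False using c nz x by simp
      qed
      define V' where "V' = V - {x, y}"
      have finV': "finite V'" using fin by (simp add: V'_def)
      have nzV': "\<forall>z\<in>V'. v z \<noteq> 0" using nz by (simp add: V'_def)
      have cardV': "card V' + 1 = 2 * k"
      proof -
        have "card V' = card V - 2" using x y xy fin by (simp add: V'_def card_Diff_subset)
        moreover have "card {x, y} \<le> card V" using x y fin by (intro card_mono) auto
        ultimately show ?thesis using cardV xy by simp
      qed
      have boundV': "\<forall>a. card {z\<in>V'. inner a (v z) > 0} \<le> k"
      proof
        fix a
        obtain t where t: "\<forall>z\<in>V. (inner a (v z) > 0 \<longrightarrow> t * inner a (v z) + inner (v x) (v z) > 0) \<and> (inner a (v z) < 0 \<longrightarrow> t * inner a (v z) + inner (v x) (v z) < 0)"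
          using EV[OF fin, of "\<lambda>z. inner a (v z)" "\<lambda>z. inner (v x) (v z)"] by blast
        define a2 where "a2 = t *\<^sub>R a + v x"
        have pres: "inner a2 (v z) > 0" if "z \<in> V" "inner a (v z) > 0" for z
          using t that by (simp add: a2_def inner_add_left)
        obtain w where w: "w \<in> {x, y}" "inner a2 (v w) > 0"
        proof (cases "inner a (v x) > 0")
          case True then show ?thesis using that pres[OF x] by blast
        next
          case False
          show ?thesis
          proof (cases "inner a (v x) = 0")
            case True
            then have "inner a2 (v x) = inner (v x) (v x)" by (simp add: a2_def inner_add_left)
            then have "inner a2 (v x) > 0" using nz x by simp
            then show ?thesis using that by blast
          next
            case f2: False
            then have "inner a (v y) > 0" using False c vy by (simp add: mult_pos_neg)
            then show ?thesis using that pres[OF y] by blast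
          qed
        qed
        have "insert w {z\<in>V'. inner a (v z) > 0} \<subseteq> {z\<in>V. inner a2 (v z) > 0}"
          using w pres x y by (auto simp: V'_def)
        then have "card (insert w {z\<in>V'. inner a (v z) > 0}) \<le> card {z\<in>V. inner a2 (v z) > 0}"
          using fin by (intro card_mono) auto
        then have "card (insert w {z\<in>V'. inner a (v z) > 0}) \<le> Suc k"
          using bound[rule_format, of a2] by linarith
        moreover have "w \<notin> {z\<in>V'. inner a (v z) > 0}" using w by (auto simp: V'_def)
        ultimately show "card {z\<in>V'. inner a (v z) > 0} \<le> k" using finV' by simp
      qed
      obtain a' m' Q' where a': "a' \<noteq> 0" and g': "good v V' a' m' Q'" and d': "dim (v ` V') \<le> m' + 1"
        using spec[OF Suc.IH, of V'] finV' nzV' cardV' boundV' by blast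
      obtain t where t: "\<forall>z\<in>V. (inner a' (v z) > 0 \<longrightarrow> t * inner a' (v z) + inner (v x) (v z) > 0) \<and> (inner a' (v z) < 0 \<longrightarrow> t * inner a' (v z) + inner (v x) (v z) < 0)"
        using EV[OF fin, of "\<lambda>z. inner a' (v z)" "\<lambda>z. inner (v x) (v z)"] by blast
      define a where "a = t *\<^sub>R a' + v x"
      have pres: "inner a (v z) > 0" if "z \<in> V" "inner a' (v z) > 0" for z
        using t that by (simp add: a_def inner_add_left)
      have ax: "inner a (v x) \<noteq> 0"
      proof (cases "inner a' (v x) = 0")
        case True
        then have "inner a (v x) = inner (v x) (v x)" by (simp add: a_def inner_add_left)
        then show ?thesis using nz x by simp
      next
        case False
        then have "inner a' (v x) > 0 \<or> inner a' (v x) < 0" by linarith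
        then show ?thesis using t x by (auto simp: a_def inner_add_left)
      qed
      have a0: "a \<noteq> 0" using ax by auto
      have Q'sub: "Q' i \<subseteq> V'" if "i \<le> m'" for i using goodD(1)[OF g'] that by blast
      have cntle: "cnt v a X \<le> cnt v a' X" if "X \<subseteq> V" for X
      proof -
        have "{z\<in>X. inner a (v z) \<le> 0} \<subseteq> {z\<in>X. inner a' (v z) \<le> 0}"
        proof
          fix z assume z: "z \<in> {z\<in>X. inner a (v z) \<le> 0}"
          then have "\<not> inner a' (v z) > 0" using pres[of z] that by auto
          then show "z \<in> {z\<in>X. inner a' (v z) \<le> 0}" using z by simp
        qed
        then show ?thesis unfolding cnt_def using fin that
          by (intro card_mono) (auto intro: finite_subset)
      qed
      define Q where "Q = Q'(Suc m' := {x, y})"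
      have g: "good v V a (Suc m') Q"
        unfolding good_def
      proof (intro conjI)
        show "(\<Union>i\<le>Suc m'. Q i) = V"
        proof -
          have "(\<Union>i\<le>Suc m'. Q i) = (\<Union>i\<le>m'. Q' i) \<union> {x, y}"
            by (auto simp: Q_def atMost_Suc)
          also have "\<dots> = V' \<union> {x, y}" using goodD(1)[OF g'] by simp
          also have "\<dots> = V" using x y by (auto simp: V'_def)
          finally show ?thesis .
        qed
        show "\<forall>i\<le>Suc m'. \<forall>j\<le>Suc m'. i \<noteq> j \<longrightarrow> Q i \<inter> Q j = {}"
        proof (intro allI impI)
          fix i j assume i: "i \<le> Suc m'" and j: "j \<le> Suc m'" and ij: "i \<noteq> j"
          show "Q i \<inter> Q j = {}"
          proof (cases "i = Suc m'")
            case True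
            then have "j \<le> m'" using j ij by simp
            then show ?thesis using True ij Q'sub[of j] by (auto simp: Q_def V'_def)
          next
            case False
            then have i': "i \<le> m'" using i by simp
            show ?thesis
            proof (cases "j = Suc m'")
              case True then show ?thesis using i' Q'sub[of i] False by (auto simp: Q_def V'_def)
            next
              case f2: False
              then have "j \<le> m'" using j by simp
              then show ?thesis using goodD(2)[OF g' i'] ij False f2 by (simp add: Q_def)
            qed
          qed
        qed
        show "\<forall>z\<in>Q 0. inner a (v z) > 0"
          using goodD(3)[OF g'] pres Q'sub[of 0] by (auto simp: Q_def V'_def)
        show "\<forall>i\<in>{1..Suc m'}. 1 \<le> cnt v a (Q i) \<and> (\<forall>b. cnt v a (Q i) \<le> cnt v b (Q i))"
        proof
          fix i assume i: "i \<in> {1..Suc m'}"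
          show "1 \<le> cnt v a (Q i) \<and> (\<forall>b. cnt v a (Q i) \<le> cnt v b (Q i))"
          proof (cases "i = Suc m'")
            case True
            have lb: "1 \<le> cnt v b {x, y}" for b
            proof -
              have "{z\<in>{x, y}. inner b (v z) \<le> 0} \<noteq> {}"
              proof (cases "inner b (v x) \<le> 0")
                case True then show ?thesis by auto
              next
                case False
                then have "inner b (v y) \<le> 0" using vy c by (simp add: mult_pos_pos)
                then show ?thesis by auto
              qed
              then show ?thesis unfolding cnt_def by (simp add: Suc_le_eq card_gt_0_iff)
            qed
            have ub: "cnt v a {x, y} \<le> 1"
            proof -
              have "{z\<in>{x, y}. inner a (v z) \<le> 0} \<subseteq> {x} \<or> {z\<in>{x, y}. inner a (v z) \<le> 0} \<subseteq> {y}"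
              proof (cases "inner a (v x) > 0")
                case True then show ?thesis by auto
              next
                case False
                then have "inner a (v x) < 0" using ax by linarith
                then have "inner a (v y) > 0" using vy c by (simp add: mult_pos_neg)
                then show ?thesis by auto
              qed
              then show ?thesis
              proof
                assume "{z\<in>{x, y}. inner a (v z) \<le> 0} \<subseteq> {x}"
                then have "card {z\<in>{x, y}. inner a (v z) \<le> 0} \<le> card {x}" by (intro card_mono) auto
                then show ?thesis by (simp add: cnt_def)
              next
                assume "{z\<in>{x, y}. inner a (v z) \<le> 0} \<subseteq> {y}"
                then have "card {z\<in>{x, y}. inner a (v z) \<le> 0} \<le> card {y}" by (intro card_mono) auto
                then show ?thesis by (simp add: cnt_def)
              qed
            qed
            show ?thesis using True lb ub by (simp add: Q_def) (meson order_trans)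
          next
            case False
            then have i': "i \<in> {1..m'}" using i by simp
            then have QQ: "Q i = Q' i" using False by (simp add: Q_def)
            have m1: "1 \<le> cnt v a' (Q' i)" and m2: "\<forall>b. cnt v a' (Q' i) \<le> cnt v b (Q' i)"
              using goodD(4,5)[OF g' i'] by auto
            have "Q' i \<subseteq> V" using Q'sub[of i] i' by (auto simp: V'_def)
            then have "cnt v a (Q' i) = cnt v a' (Q' i)" using cntle m2 by (meson le_antisym)
            then show ?thesis using QQ m1 m2 by simp
          qed
        qed
      qed
      have "dim (v ` V) \<le> dim (v ` V') + 1"
      proof -
        have "v ` V \<subseteq> span (insert (v x) (v ` V'))"
        proof
          fix u assume "u \<in> v ` V"
          then obtain z where z: "z \<in> V" "u = v z" by blast
          show "u \<in> span (insert (v x) (v ` V'))"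
          proof (cases "z \<in> V'")
            case True then show ?thesis using z by (simp add: span_base)
          next
            case False
            then have "z = x \<or> z = y" using z by (auto simp: V'_def)
            then show ?thesis
            proof
              assume "z = x" then show ?thesis using z by (simp add: span_base)
            next
              assume "z = y"
              then have "u = (-c) *\<^sub>R v x" using z vy by simp
              moreover have "(-c) *\<^sub>R v x \<in> span (insert (v x) (v ` V'))" by (intro span_scale span_base) simp
              ultimately show ?thesis by simp
            qed
          qed
        qed
        then have "dim (v ` V) \<le> dim (span (insert (v x) (v ` V')))" by (rule dim_subset)
        also have "\<dots> = dim (insert (v x) (v ` V'))" by (rule dim_span)
        also have "\<dots> \<le> dim (v ` V') + 1" by (simp add: dim_insert)
        finally show ?thesis .
      qed
      then have "dim (v ` V) \<le> Suc m' + 1" using d' by simp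
      then show ?thesis using a0 g by blast
    qed
  qed
qed



theorem mainTheorem6:
  fixes v :: "'i \<Rightarrow> 'a::euclidean_space" and V :: "'i set"
    and r n :: nat and d \<delta> :: int
  assumes "finite V"
    and "vc_rank v V = r"
    and "\<forall>i\<in>V. v i \<noteq> 0"
    and "deg_star v V = \<delta>"
    and "card V = n"
    and "int n = int r + d + 1"
    and "int n = 2 * int r + 2 * \<delta> - 1"
  shows "\<exists>m P. codeg_decomposition v V m P \<and> int m \<ge> int r - 1"
proof -
  note fin = assms(1) and nz = assms(3)
  define Ps where "Ps = {card {i \<in> V. a \<bullet> v i > 0} | a. a \<noteq> 0}"
  define K where "K = Max Ps"
  have finPs: "finite Ps"
    by (rule finite_subset[of _ "{0..card V}"]) (auto simp: Ps_def intro!: card_mono fin)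
  obtain e :: 'a where e: "e \<noteq> 0" using SOME_Basis nonzero_Basis by blast
  have "\<delta> = int K - int r" using assms(2,4) by (simp add: deg_star_def vc_rank_def K_def Ps_def)
  then have cardV: "card V + 1 = 2 * K" using assms(5,7) by linarith
  have bound: "\<forall>a. card {x\<in>V. inner a (v x) > 0} \<le> K"
  proof
    fix a :: 'a
    show "card {x\<in>V. inner a (v x) > 0} \<le> K"
    proof (cases "a = 0")
      case True then show ?thesis by simp
    next
      case False
      then have "card {x\<in>V. inner a (v x) > 0} \<in> Ps" by (auto simp: Ps_def)
      then show ?thesis using finPs by (simp add: K_def)
    qed
  qed
  obtain a m Q where a0: "a \<noteq> 0" and g: "good v V a m Q" and dm: "dim (v ` V) \<le> m + 1"
    using spec[OF claimC[of v K], of V] fin nz cardV bound by blast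
  have Qsub: "Q i \<subseteq> V" if "i \<le> m" for i using goodD(1)[OF g] that by blast
  have finQ: "finite (Q i)" if "i \<le> m" for i using Qsub[OF that] fin by (rule finite_subset)
  have codegQ: "codeg_star v (Q i) = cnt v a (Q i)" if i: "i \<in> {1..m}" for i
  proof -
    have fq: "finite (Q i)" using finQ i by simp
    have "Min {card {x \<in> Q i. b \<bullet> v x \<le> 0} | b. b \<noteq> 0} = cnt v a (Q i)"
    proof (rule Min_eqI)
      show "finite {card {x \<in> Q i. b \<bullet> v x \<le> 0} | b. b \<noteq> 0}"
        by (rule finite_subset[of _ "{0..card (Q i)}"]) (auto intro!: card_mono fq)
      show "cnt v a (Q i) \<le> y" if "y \<in> {card {x \<in> Q i. b \<bullet> v x \<le> 0} | b. b \<noteq> 0}" for y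
        using that goodD(5)[OF g i] by (auto simp: cnt_def)
      show "cnt v a (Q i) \<in> {card {x \<in> Q i. b \<bullet> v x \<le> 0} | b. b \<noteq> 0}"
        using a0 by (auto simp: cnt_def)
    qed
    then show ?thesis by (simp add: codeg_star_def)
  qed
  have split: "cnt v b V = (\<Sum>i\<le>m. cnt v b (Q i))" for b
  proof -
    have "{x\<in>V. inner b (v x) \<le> 0} = (\<Union>i\<le>m. {x\<in>Q i. inner b (v x) \<le> 0})"
      using goodD(1)[OF g] by blast
    then have "cnt v b V = card (\<Union>i\<le>m. {x\<in>Q i. inner b (v x) \<le> 0})" by (simp add: cnt_def)
    also have "\<dots> = (\<Sum>i\<le>m. card {x\<in>Q i. inner b (v x) \<le> 0})"
    proof (rule card_UN_disjoint)
      show "finite {..m}" by simp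
      show "\<forall>i\<in>{..m}. finite {x\<in>Q i. inner b (v x) \<le> 0}" using finQ by simp
      show "\<forall>i\<in>{..m}. \<forall>j\<in>{..m}. i \<noteq> j \<longrightarrow> {x\<in>Q i. inner b (v x) \<le> 0} \<inter> {x\<in>Q j. inner b (v x) \<le> 0} = {}"
        using goodD(2)[OF g] by auto
    qed
    finally show ?thesis by (simp add: cnt_def)
  qed
  have sum0: "(\<Sum>i\<le>m. f i) = f 0 + (\<Sum>i=1..m. f i)" for f :: "nat \<Rightarrow> nat"
    by (simp add: atMost_atLeast0 sum.atLeast_Suc_atMost)
  have "{x\<in>Q 0. inner a (v x) \<le> 0} = {}" using goodD(3)[OF g] by force
  then have cQ0: "cnt v a (Q 0) = 0" unfolding cnt_def by (simp only: card.empty)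
  have codegV: "codeg_star v V = (\<Sum>i=1..m. cnt v a (Q i))"
  proof -
    have "Min {card {x \<in> V. b \<bullet> v x \<le> 0} | b. b \<noteq> 0} = cnt v a V"
    proof (rule Min_eqI)
      show "finite {card {x \<in> V. b \<bullet> v x \<le> 0} | b. b \<noteq> 0}"
        by (rule finite_subset[of _ "{0..card V}"]) (auto intro!: card_mono fin)
      show "cnt v a V \<le> y" if yin: "y \<in> {card {x \<in> V. b \<bullet> v x \<le> 0} | b. b \<noteq> 0}" for y
      proof -
        obtain b where y: "y = cnt v b V" using yin by (auto simp: cnt_def)
        have "cnt v a V = (\<Sum>i=1..m. cnt v a (Q i))" using split[of a] sum0 cQ0 by simp
        also have "\<dots> \<le> (\<Sum>i=1..m. cnt v b (Q i))"
          by (rule sum_mono) (rule goodD(5)[OF g])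
        also have "\<dots> \<le> cnt v b V" using split[of b] sum0[of "\<lambda>i. cnt v b (Q i)"] by simp
        finally show ?thesis using y by simp
      qed
      show "cnt v a V \<in> {card {x \<in> V. b \<bullet> v x \<le> 0} | b. b \<noteq> 0}"
        using a0 by (auto simp: cnt_def)
    qed
    then have "codeg_star v V = cnt v a V" by (simp add: codeg_star_def)
    then show ?thesis using split[of a] sum0 cQ0 by simp
  qed
  have "codeg_decomposition v V m Q"
    unfolding codeg_decomposition_def
  proof (intro conjI)
    show "(\<Union>i\<le>m. Q i) = V" by (rule goodD(1)[OF g])
    show "\<forall>i\<le>m. \<forall>j\<le>m. i \<noteq> j \<longrightarrow> Q i \<inter> Q j = {}" using goodD(2)[OF g] by blast
    show "codeg_star v V = (\<Sum>i = 1..m. codeg_star v (Q i))"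
      using codegV codegQ by simp
    show "\<forall>i\<in>{1..m}. 1 \<le> codeg_star v (Q i)" using codegQ goodD(4)[OF g] by simp
  qed
  moreover have "int m \<ge> int r - 1" using dm assms(2) by (simp add: vc_rank_def)
  ultimately show ?thesis by blast
qed

end
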